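(* Let $\{S(t)\}_{t\ge0}$ be a semigroup on a complete metric space $(X,d)$ and let $B\subseteq X$ be a positively invariant bounded set. Let $\varphi:\mathbb{R}^+\to\mathbb{R}^+$ satisfy $\varphi(t)\to0$ as $t\to+\infty$, and let $T>0$. Suppose that for every $t\ge T$ and every $\epsilon>0$ there exists a function $\Phi_{t,\epsilon}:X\times X\to\mathbb{R}^+$ which is contractive on $B\times B$, i.e. $$\liminf_{m\to\infty}\liminf_{n\to\infty}\Phi_{t,\epsilon}(y_n,y_m)=0\quad\text{for every sequence }\{y_n\}\subseteq B,$$ and such that $$d(S(t)y_1,S(t)y_2)\le\varphi(t)+\epsilon+\Phi_{t,\epsilon}(y_1,y_2)\quad\forall y_1,y_2\in B .$$ Then $\alpha(S(t)B)\le3\varphi(t)$ for all $t\ge T$.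
   Context: A semigroup $\{S(t)\}_{t\ge0}$ on $X$ is a family of continuous maps $S(t):X\to X$ with $S(0)=I$, $S(t+s)=S(t)S(s)$. $B$ positively invariant means $S(t)B\subseteq B$ for all $t\ge0$. $\alpha$ is the Kuratowski measure of noncompactness, $\alpha(B)=\inf\{\delta>0:B\text{ has a finite cover by sets of diameter}<\delta\}$. *)

theory Defs
  imports "HOL-Analysis.Analysis"
begin

definition kuratowski_alpha :: "'a::metric_space set \<Rightarrow> real" where
  "kuratowski_alpha A = Inf {\<delta>. \<delta> > 0 \<and> (\<exists>F. finite F \<and> A \<subseteq> \<Union>F \<and>
       (\<forall>C\<in>F. bounded C \<and> diameter C < \<delta>))}"

definition semigroup_on :: "(real \<Rightarrow> 'a::topological_space \<Rightarrow> 'a) \<Rightarrow> bool" where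
  "semigroup_on S \<longleftrightarrow> (\<forall>t\<ge>0. continuous_on UNIV (S t)) \<and> S 0 = id \<and>
     (\<forall>t\<ge>0. \<forall>s\<ge>0. S (t + s) = S t \<circ> S s)"

definition positively_invariant :: "(real \<Rightarrow> 'a \<Rightarrow> 'a) \<Rightarrow> 'a set \<Rightarrow> bool" where
  "positively_invariant S B \<longleftrightarrow> (\<forall>t\<ge>0. S t ` B \<subseteq> B)"

definition contractive_on :: "'a set \<Rightarrow> ('a \<Rightarrow> 'a \<Rightarrow> real) \<Rightarrow> bool" where
  "contractive_on B \<Phi> \<longleftrightarrow> (\<forall>y::nat \<Rightarrow> 'a. (\<forall>n. y n \<in> B) \<longrightarrow>
     liminf (\<lambda>m. liminf (\<lambda>n. ereal (\<Phi> (y n) (y m)))) = 0)"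

end

theory Submission
  imports Defs
begin

lemma diam_cball_le:
  fixes x :: "'a::metric_space"
  assumes "0 \<le> r"
  shows "diameter (cball x r) \<le> 2 * r"
proof -
  have "dist a b \<le> 2 * r" if "a \<in> cball x r" "b \<in> cball x r" for a b
    using that dist_triangle[of a b x] by (auto simp: dist_commute)
  then show ?thesis using assms
    by (auto simp: diameter_def intro!: cSUP_least)
qed

lemma net_exists:
  fixes S :: "'b \<Rightarrow> 'a::metric_space" and \<Phi> :: "'b \<Rightarrow> 'b \<Rightarrow> real"
  assumes contr: "contractive_on B \<Phi>"
    and ineq: "\<forall>y1\<in>B. \<forall>y2\<in>B. dist (S y1) (S y2) \<le> c + \<Phi> y1 y2"
    and e: "e > 0"
  shows "\<exists>F. finite F \<and> F \<subseteq> B \<and> (\<forall>y\<in>B. \<exists>x\<in>F. dist (S y) (S x) \<le> c + e)"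
proof (rule ccontr)
  assume "\<not> ?thesis"
  then have "\<forall>F. \<exists>z. finite F \<and> F \<subseteq> B \<longrightarrow> z \<in> B \<and> (\<forall>x\<in>F. dist (S z) (S x) > c + e)"
    by (auto simp: not_le)
  then obtain g where g0: "\<forall>F. finite F \<and> F \<subseteq> B \<longrightarrow> g F \<in> B \<and> (\<forall>x\<in>F. dist (S (g F)) (S x) > c + e)"
    by (rule choice[THEN exE])
  have g: "\<And>F. finite F \<Longrightarrow> F \<subseteq> B \<Longrightarrow> g F \<in> B \<and> (\<forall>x\<in>F. dist (S (g F)) (S x) > c + e)"
    using g0 by blast
  define P where "P = rec_nat {} (\<lambda>_ Q. insert (g Q) Q)"
  have P0: "P 0 = {}" and PS: "\<And>n. P (Suc n) = insert (g (P n)) (P n)"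
    by (simp_all add: P_def)
  have Pfin: "finite (P n) \<and> P n \<subseteq> B" for n
  proof (induction n)
    case 0 show ?case by (simp add: P0)
  next
    case (Suc n)
    then have "g (P n) \<in> B" using g by blast
    then show ?case using Suc by (simp add: PS)
  qed
  define y where "y n = g (P n)" for n
  have yB: "y n \<in> B" for n
    unfolding y_def using g[OF conjunct1[OF Pfin[of n]] conjunct2[OF Pfin[of n]]] by (rule conjunct1)
  have Pmono: "m < n \<Longrightarrow> y m \<in> P n" for m n
  proof (induction n)
    case 0 then show ?case by simp
  next
    case (Suc n) then show ?case by (cases "m = n") (auto simp: PS y_def)
  qed
  have sep: "m < n \<Longrightarrow> dist (S (y n)) (S (y m)) > c + e" for m n
    using g[OF conjunct1[OF Pfin[of n]] conjunct2[OF Pfin[of n]]] Pmono[of m n] unfolding y_def by blast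
  have L: "liminf (\<lambda>m. liminf (\<lambda>n. ereal (\<Phi> (y n) (y m)))) = 0"
    using contr yB unfolding contractive_on_def by blast
  then have "\<not> ereal e \<le> liminf (\<lambda>m. liminf (\<lambda>n. ereal (\<Phi> (y n) (y m))))"
    using e by simp
  then obtain w where w: "w < ereal e" and "\<not> eventually (\<lambda>m. w < liminf (\<lambda>n. ereal (\<Phi> (y n) (y m)))) sequentially"
    unfolding le_Liminf_iff by blast
  then obtain m where m: "\<not> w < liminf (\<lambda>n. ereal (\<Phi> (y n) (y m)))"
    unfolding eventually_sequentially by blast
  then have "\<not> ereal e \<le> liminf (\<lambda>n. ereal (\<Phi> (y n) (y m)))"
    using w by auto
  then obtain w2 where w2: "w2 < ereal e" and "\<not> eventually (\<lambda>n. w2 < ereal (\<Phi> (y n) (y m))) sequentially"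
    unfolding le_Liminf_iff by blast
  then obtain n where n: "n \<ge> Suc m" "\<not> w2 < ereal (\<Phi> (y n) (y m))"
    unfolding eventually_sequentially by blast
  then have "ereal (\<Phi> (y n) (y m)) < ereal e" using w2 by (meson not_less order.strict_trans1)
  then have "\<Phi> (y n) (y m) < e" by simp
  moreover have "dist (S (y n)) (S (y m)) \<le> c + \<Phi> (y n) (y m)" using ineq yB by blast
  ultimately have "dist (S (y n)) (S (y m)) < c + e" by linarith
  moreover have "dist (S (y n)) (S (y m)) > c + e" using sep n by simp
  ultimately show False by simp
qed

theorem theorem4p4:
  fixes S :: "real \<Rightarrow> 'a::complete_space \<Rightarrow> 'a"
    and B :: "'a set"
    and \<phi> :: "real \<Rightarrow> real"
    and \<Phi> :: "real \<Rightarrow> real \<Rightarrow> 'a \<Rightarrow> 'a \<Rightarrow> real"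
    and T :: real
  assumes "semigroup_on S"
    and "positively_invariant S B"
    and "bounded B"
    and "\<forall>t\<ge>0. \<phi> t \<ge> 0"
    and "(\<phi> \<longlongrightarrow> 0) at_top"
    and "T > 0"
    and "\<forall>t\<ge>T. \<forall>\<epsilon>>0. (\<forall>x y. \<Phi> t \<epsilon> x y \<ge> 0) \<and> contractive_on B (\<Phi> t \<epsilon>) \<and>
           (\<forall>y1\<in>B. \<forall>y2\<in>B. dist (S t y1) (S t y2) \<le> \<phi> t + \<epsilon> + \<Phi> t \<epsilon> y1 y2)"
  shows "\<forall>t\<ge>T. kuratowski_alpha (S t ` B) \<le> 3 * \<phi> t"
proof (intro allI impI)
  fix t assume t: "t \<ge> T"
  have phi0: "\<phi> t \<ge> 0" using assms(4,6) t by auto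
  define D where "D = {\<delta>. \<delta> > 0 \<and> (\<exists>F. finite F \<and> S t ` B \<subseteq> \<Union>F \<and>
       (\<forall>C\<in>F. bounded C \<and> diameter C < \<delta>))}"
  have inD: "\<delta> \<in> D" if d: "\<delta> > 3 * \<phi> t" for \<delta>
  proof -
    define \<epsilon> where "\<epsilon> = (\<delta> - 2 * \<phi> t) / 8"
    have ep: "\<epsilon> > 0" using d phi0 by (simp add: \<epsilon>_def)
    have h: "contractive_on B (\<Phi> t \<epsilon>)"
      "\<forall>y1\<in>B. \<forall>y2\<in>B. dist (S t y1) (S t y2) \<le> (\<phi> t + \<epsilon>) + \<Phi> t \<epsilon> y1 y2"
      using assms(7) t ep by (auto simp: add.assoc)
    obtain F where F: "finite F" "F \<subseteq> B"
      "\<forall>y\<in>B. \<exists>x\<in>F. dist (S t y) (S t x) \<le> \<phi> t + \<epsilon> + \<epsilon>"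
      using net_exists[OF h ep] by blast
    define r where "r = \<phi> t + \<epsilon> + \<epsilon>"
    have r0: "r \<ge> 0" using phi0 ep r_def by simp
    have "S t ` B \<subseteq> \<Union>((\<lambda>x. cball (S t x) r) ` F)"
      using F(3) by (force simp: r_def dist_commute)
    moreover have "\<forall>C\<in>(\<lambda>x. cball (S t x) r) ` F. bounded C \<and> diameter C < \<delta>"
    proof
      fix C assume "C \<in> (\<lambda>x. cball (S t x) r) ` F"
      then obtain x where "C = cball (S t x) r" by blast
      moreover have "2 * r < \<delta>" unfolding r_def \<epsilon>_def using d phi0 by (simp add: field_simps)
      ultimately show "bounded C \<and> diameter C < \<delta>"
        using diam_cball_le[OF r0, of "S t x"] by auto
    qed
    moreover have "\<delta> > 0" using d phi0 by (simp add: field_simps)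
    ultimately show ?thesis unfolding D_def using F(1) by blast
  qed
  have bdd: "bdd_below D" unfolding D_def by (rule bdd_belowI[of _ 0]) auto
  show "kuratowski_alpha (S t ` B) \<le> 3 * \<phi> t"
  proof (rule ccontr)
    assume "\<not> ?thesis"
    then have a: "Inf D > 3 * \<phi> t" by (simp add: kuratowski_alpha_def D_def)
    define \<delta> where "\<delta> = (Inf D + 3 * \<phi> t) / 2"
    have "\<delta> \<in> D" using inD a \<delta>_def by simp
    then have "Inf D \<le> \<delta>" using cInf_lower[OF _ bdd] by blast
    then show False using a \<delta>_def by simp
  qed
qed

end
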